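(* Let $(N,M,G,\rhd)$ be a lexicographic mixed instance, let $H\subseteq \bar C$ be a set of common chores, and let $B$ be a partial allocation of items of $M\setminus H$ that is Pareto optimal. Suppose that for every agent $i\in N$, every item of $H$ is $\rhd_i$-more important than every item of $G_i\cup B_i$. Then every (possibly partial) allocation $A$ obtained by extending $B$ by a serial dictatorship on the items of $H$, with an arbitrary ordering of agents and arbitrary quotas, is Pareto optimal.
   Context: A lexicographic mixed instance $(N,M,G,\rhd)$ consists of a set $N=[n]$ of agents, a finite set $M$ of items, for each agent $i$ a set $G_i\subseteq M$ of goods for $i$ (chores for $i$: $C_i=M\setminus G_i$), and for each $i$ a strict linear order $\rhd_i$ on $M$. Common chores: $\bar C=\bigcap_{i\in N}C_i$. For distinct $X,Y\subseteq M$, $X\succ_i Y$ iff the $\rhd_i$-most important item of $X\triangle Y$ lies in $(X\cap G_i)\cup(Y\cap C_i)$; $X\succeq_i Y$ means $X\succ_i Y$ or $X=Y$. A (partial) allocation is a tuple $(A_i)_{i\in N}$ of pairwise disjoint subsets of $M$. A partial allocation $A'$ Pareto dominates $A$ if $\bigcup_i A'_i=\bigcup_i A_i$, $A'_i\succeq_i A_i$ for all $i$, and $A'_i\succ_i A_i$ for some $i$; $A$ is Pareto optimal if no partial allocation Pareto dominates it. A serial dictatorship with ordering $\sigma=(\sigma_1,\dots,\sigma_n)$ of the agents and integer quotas $q=(q_1,\dots,q_n)$, started from a partial allocation, processes $\sigma_1,\sigma_2,\dots$ in turn; at agent $\sigma_t$'s step, if unallocated items (here: items of $H$) remain, $\sigma_t$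 adds to its bundle its $q_{\sigma_t}$ most preferred remaining items (the most important remaining goods for it, and then, if there are not enough goods, the least important remaining chores for it), or all remaining ones if fewer remain. *)

theory Defs
  imports Main
begin

text \<open>Agents are natural numbers; N = {..<n}. Items have type 'b.
  G i : goods of agent i; R i : strict importance order of agent i,
  (x,y) \<in> R i meaning x is more important than y for agent i.\<close>

definition lex_instance :: "nat \<Rightarrow> 'b set \<Rightarrow> (nat \<Rightarrow> 'b set) \<Rightarrow> (nat \<Rightarrow> 'b rel) \<Rightarrow> bool" where
  "lex_instance n M G R \<longleftrightarrow> finite M \<and>
     (\<forall>i<n. G i \<subseteq> M \<and> R i \<subseteq> M \<times> M \<and> strict_linear_order_on M (R i))"

definition common_chores :: "nat \<Rightarrow> 'b set \<Rightarrow> (nat \<Rightarrow> 'b set) \<Rightarrow> 'b set" where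
  "common_chores n M G = {x \<in> M. \<forall>i<n. x \<notin> G i}"

definition strict_pref :: "'b set \<Rightarrow> (nat \<Rightarrow> 'b set) \<Rightarrow> (nat \<Rightarrow> 'b rel) \<Rightarrow> nat \<Rightarrow> 'b set \<Rightarrow> 'b set \<Rightarrow> bool" where
  "strict_pref M G R i X Y \<longleftrightarrow> X \<noteq> Y \<and>
     (\<exists>z \<in> (X - Y) \<union> (Y - X).
        (\<forall>w \<in> (X - Y) \<union> (Y - X). w \<noteq> z \<longrightarrow> (z, w) \<in> R i) \<and>
        (z \<in> X \<inter> G i \<or> z \<in> Y \<inter> (M - G i)))"

definition weak_pref :: "'b set \<Rightarrow> (nat \<Rightarrow> 'b set) \<Rightarrow> (nat \<Rightarrow> 'b rel) \<Rightarrow> nat \<Rightarrow> 'b set \<Rightarrow> 'b set \<Rightarrow> bool" where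
  "weak_pref M G R i X Y \<longleftrightarrow> strict_pref M G R i X Y \<or> X = Y"

definition partial_alloc :: "nat \<Rightarrow> 'b set \<Rightarrow> (nat \<Rightarrow> 'b set) \<Rightarrow> bool" where
  "partial_alloc n M A \<longleftrightarrow> (\<forall>i<n. A i \<subseteq> M) \<and> (\<forall>i<n. \<forall>j<n. i \<noteq> j \<longrightarrow> A i \<inter> A j = {})"

definition pareto_dominates :: "nat \<Rightarrow> 'b set \<Rightarrow> (nat \<Rightarrow> 'b set) \<Rightarrow> (nat \<Rightarrow> 'b rel) \<Rightarrow> (nat \<Rightarrow> 'b set) \<Rightarrow> (nat \<Rightarrow> 'b set) \<Rightarrow> bool" where
  "pareto_dominates n M G R A' A \<longleftrightarrow>
     (\<Union>i<n. A' i) = (\<Union>i<n. A i) \<and>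
     (\<forall>i<n. weak_pref M G R i (A' i) (A i)) \<and>
     (\<exists>i<n. strict_pref M G R i (A' i) (A i))"

definition pareto_optimal :: "nat \<Rightarrow> 'b set \<Rightarrow> (nat \<Rightarrow> 'b set) \<Rightarrow> (nat \<Rightarrow> 'b rel) \<Rightarrow> (nat \<Rightarrow> 'b set) \<Rightarrow> bool" where
  "pareto_optimal n M G R A \<longleftrightarrow>
     (\<nexists>A'. partial_alloc n M A' \<and> pareto_dominates n M G R A' A)"

definition item_better :: "(nat \<Rightarrow> 'b set) \<Rightarrow> (nat \<Rightarrow> 'b rel) \<Rightarrow> nat \<Rightarrow> 'b \<Rightarrow> 'b \<Rightarrow> bool" where
  "item_better G R i x y \<longleftrightarrow>
     (x \<in> G i \<and> y \<notin> G i) \<or>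
     (x \<in> G i \<and> y \<in> G i \<and> (x, y) \<in> R i) \<or>
     (x \<notin> G i \<and> y \<notin> G i \<and> (y, x) \<in> R i)"

definition sd_pick :: "(nat \<Rightarrow> 'b set) \<Rightarrow> (nat \<Rightarrow> 'b rel) \<Rightarrow> nat \<Rightarrow> nat \<Rightarrow> 'b set \<Rightarrow> 'b set \<Rightarrow> bool" where
  "sd_pick G R i k Rem P \<longleftrightarrow> P \<subseteq> Rem \<and> card P = min k (card Rem) \<and>
     (\<forall>x\<in>P. \<forall>y\<in>Rem - P. item_better G R i x y)"

text \<open>sd_run G R q \<sigma> A Rem A': running the serial dictatorship with
  ordering \<sigma> and quotas q from partial allocation A with unallocated items
  Rem yields allocation A'.\<close>
fun sd_run :: "(nat \<Rightarrow> 'b set) \<Rightarrow> (nat \<Rightarrow> 'b rel) \<Rightarrow> (nat \<Rightarrow> nat) \<Rightarrow> nat list \<Rightarrow>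
    (nat \<Rightarrow> 'b set) \<Rightarrow> 'b set \<Rightarrow> (nat \<Rightarrow> 'b set) \<Rightarrow> bool" where
  "sd_run G R q [] A Rem A' \<longleftrightarrow> A' = A"
| "sd_run G R q (i # \<sigma>) A Rem A' \<longleftrightarrow>
     (\<exists>P. sd_pick G R i (q i) Rem P \<and> sd_run G R q \<sigma> (A(i := A i \<union> P)) (Rem - P) A')"

end

theory Submission
  imports Defs
begin

lemma sd_struct:
  "sd_run G R q \<sigma> C Rem A \<Longrightarrow>
    (\<forall>j. C j \<subseteq> A j \<and> A j - C j \<subseteq> Rem) \<and> (\<forall>j. j \<notin> set \<sigma> \<longrightarrow> A j = C j)"
proof (induction \<sigma> arbitrary: C Rem)
  case Nil thus ?case by simp
next
  case (Cons t \<sigma>)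
  obtain P where P: "sd_pick G R t (q t) Rem P"
    and r: "sd_run G R q \<sigma> (C(t := C t \<union> P)) (Rem - P) A" using Cons.prems by auto
  have PR: "P \<subseteq> Rem" using P by (simp add: sd_pick_def)
  note IH = Cons.IH[OF r]
  show ?case
  proof (intro conjI allI impI)
    fix j
    have a: "(C(t := C t \<union> P)) j \<subseteq> A j" and b: "A j - (C(t := C t \<union> P)) j \<subseteq> Rem - P"
      using IH by blast+
    show "C j \<subseteq> A j" using a by (cases "j = t") auto
    show "A j - C j \<subseteq> Rem" using a b PR by (cases "j = t") auto
  next
    fix j assume "j \<notin> set (t # \<sigma>)"
    then show "A j = C j" using IH by auto
  qed
qed

lemma sd_eq:
  assumes run: "sd_run G R q \<sigma> C Rem A"
    and dist: "distinct \<sigma>"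
    and ord: "\<forall>j\<in>set \<sigma>. trans (R j) \<and> irrefl (R j)"
    and ch: "\<forall>j\<in>set \<sigma>. Rem \<inter> G j = {}"
    and disj: "\<forall>j\<in>set \<sigma>. C j \<inter> Rem = {}"
    and star: "\<forall>j\<in>set \<sigma>. \<forall>y \<in> X j - (A j - C j). \<exists>p \<in> (A j - C j) - X j. (p,y) \<in> R j"
    and cov: "(\<Union>j\<in>set \<sigma>. A j - C j) \<subseteq> (\<Union>j\<in>set \<sigma>. X j)"
  shows "\<forall>j\<in>set \<sigma>. X j = A j - C j"
  using assms
proof (induction \<sigma> arbitrary: C Rem)
  case Nil thus ?case by simp
next
  case (Cons t \<sigma>)
  obtain P where P: "sd_pick G R t (q t) Rem P"
    and r: "sd_run G R q \<sigma> (C(t := C t \<union> P)) (Rem - P) A" using Cons.prems by auto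
  define C' where "C' = C(t := C t \<union> P)"
  have r': "sd_run G R q \<sigma> C' (Rem - P) A" using r C'_def by simp
  have PR: "P \<subseteq> Rem" using P by (simp add: sd_pick_def)
  note st = sd_struct[OF r']
  have tn: "t \<notin> set \<sigma>" using Cons.prems by simp
  have At: "A t = C t \<union> P" using st tn C'_def by auto
  have Pt: "A t - C t = P" using At PR Cons.prems(5) by auto
  have C'j: "\<And>j. j \<in> set \<sigma> \<Longrightarrow> C' j = C j" using tn C'_def by auto
  have K: "X t \<inter> (Rem - P) = {}"
  proof (rule ccontr)
    assume "X t \<inter> (Rem - P) \<noteq> {}"
    then obtain y where y: "y \<in> X t" "y \<in> Rem" "y \<notin> P" by auto
    have yy: "y \<in> X t - (A t - C t)" using y Pt by simp
    have "\<exists>p \<in> (A t - C t) - X t. (p,y) \<in> R t" using Cons.prems(6) yy by simp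
    then obtain p where p: "p \<in> P" "p \<notin> X t" "(p, y) \<in> R t"
      using Pt by auto
    have "item_better G R t p y" using P p y by (auto simp: sd_pick_def)
    moreover have "p \<notin> G t" "y \<notin> G t" using Cons.prems(4) p PR y by auto
    ultimately have "(y, p) \<in> R t" by (auto simp: item_better_def)
    with p Cons.prems(3) show False
      by (meson irrefl_def list.set_intros(1) transE)
  qed
  have sub: "\<And>j. j \<in> set \<sigma> \<Longrightarrow> A j - C j \<subseteq> Rem - P" using st C'j by metis
  have cov': "(\<Union>j\<in>set \<sigma>. A j - C' j) \<subseteq> (\<Union>j\<in>set \<sigma>. X j)"
  proof
    fix x assume "x \<in> (\<Union>j\<in>set \<sigma>. A j - C' j)"
    then obtain j where j: "j \<in> set \<sigma>" "x \<in> A j - C j" using C'j by auto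
    have xr: "x \<in> Rem - P" using sub j by auto
    from j Cons.prems(7) obtain k where k: "k \<in> set (t # \<sigma>)" "x \<in> X k" by auto
    have "k \<noteq> t" using K xr k by auto
    then show "x \<in> (\<Union>j\<in>set \<sigma>. X j)" using k by auto
  qed
  have IH: "\<forall>j\<in>set \<sigma>. X j = A j - C' j"
    apply (rule Cons.IH[OF r'])
    using Cons.prems C'j cov' by auto
  have IH2: "\<forall>j\<in>set \<sigma>. X j = A j - C j" using IH C'j by auto
  have PX: "P \<subseteq> X t"
  proof
    fix p assume p: "p \<in> P"
    then have "p \<in> A t - C t" using Pt by simp
    then have "p \<in> (\<Union>j\<in>set (t # \<sigma>). A j - C j)" by simp
    then have "p \<in> (\<Union>j\<in>set (t # \<sigma>). X j)" using Cons.prems(7) by blast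
    then obtain k where k: "k \<in> set (t # \<sigma>)" "p \<in> X k" by blast
    show "p \<in> X t"
    proof (cases "k = t")
      case True thus ?thesis using k by simp
    next
      case False
      then have "k \<in> set \<sigma>" using k by simp
      then have "p \<in> Rem - P" using IH2 sub k by auto
      with p show ?thesis by simp
    qed
  qed
  have "X t = P"
  proof (rule ccontr)
    assume "X t \<noteq> P"
    then obtain y where "y \<in> X t - P" using PX by auto
    then obtain p where "p \<in> P - X t" using Cons.prems(6) Pt by fastforce
    then show False using PX by auto
  qed
  then show ?case using IH2 Pt by auto
qed

lemma strict_pref_cong:
  assumes "X - Y = X' - Y'" "Y - X = Y' - X'"
  shows "strict_pref M G R i X Y = strict_pref M G R i X' Y'"
proof -
  have e: "(X = Y) = (X' = Y')" using assms by blast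
  have "\<And>z. z \<in> (X - Y) \<union> (Y - X) \<Longrightarrow>
     (z \<in> X \<inter> G i \<or> z \<in> Y \<inter> (M - G i)) = (z \<in> X' \<inter> G i \<or> z \<in> Y' \<inter> (M - G i))"
    using assms by blast
  then show ?thesis unfolding strict_pref_def using e assms by (metis (no_types, lifting))
qed

theorem lemma1:
  fixes n :: nat and M :: "'b set" and G :: "nat \<Rightarrow> 'b set" and R :: "nat \<Rightarrow> 'b rel"
    and H :: "'b set" and B :: "nat \<Rightarrow> 'b set"
    and \<sigma> :: "nat list" and q :: "nat \<Rightarrow> nat" and A :: "nat \<Rightarrow> 'b set"
  assumes inst: "lex_instance n M G R"
    and H: "H \<subseteq> common_chores n M G"
    and B: "partial_alloc n (M - H) B"
    and B_po: "pareto_optimal n M G R B"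
    and imp: "\<forall>i<n. \<forall>h\<in>H. \<forall>x \<in> G i \<union> B i. (h, x) \<in> R i"
    and \<sigma>: "distinct \<sigma>" "set \<sigma> = {..<n}"
    and run: "sd_run G R q \<sigma> B H A"
  shows "pareto_optimal n M G R A"
proof -
  have ord: "\<forall>i<n. trans (R i) \<and> irrefl (R i)" using inst
    by (auto simp: lex_instance_def strict_linear_order_on_def)
  have HG: "\<forall>i<n. H \<inter> G i = {}" using H by (auto simp: common_chores_def)
  have BH: "\<forall>i<n. B i \<inter> H = {}" using B by (auto simp: partial_alloc_def)
  have BA: "\<forall>j. B j \<subseteq> A j \<and> A j - B j \<subseteq> H" using sd_struct[OF run] by blast
  show ?thesis unfolding pareto_optimal_def
  proof
    assume "\<exists>A'. partial_alloc n M A' \<and> pareto_dominates n M G R A' A"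
    then obtain A' where pa: "partial_alloc n M A'" and dom: "pareto_dominates n M G R A' A"
      by blast
    from dom have U: "(\<Union>i<n. A' i) = (\<Union>i<n. A i)"
      and W: "\<forall>i<n. weak_pref M G R i (A' i) (A i)"
      and S: "\<exists>i<n. strict_pref M G R i (A' i) (A i)"
      by (auto simp: pareto_dominates_def)
    define X where "X j = A' j \<inter> H" for j
    have star: "\<forall>j\<in>set \<sigma>. \<forall>y \<in> X j - (A j - B j). \<exists>p \<in> (A j - B j) - X j. (p,y) \<in> R j"
    proof (intro ballI)
      fix j y assume j: "j \<in> set \<sigma>" and y: "y \<in> X j - (A j - B j)"
      have jn: "j < n" using j \<sigma> by auto
      have yA: "y \<in> A' j" "y \<in> H" "y \<notin> A j" using y BH jn X_def by auto
      then have "A' j \<noteq> A j" by auto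
      then have sp: "strict_pref M G R j (A' j) (A j)" using W jn by (auto simp: weak_pref_def)
      then obtain z where z: "z \<in> (A' j - A j) \<union> (A j - A' j)"
        and zw: "\<forall>w \<in> (A' j - A j) \<union> (A j - A' j). w \<noteq> z \<longrightarrow> (z, w) \<in> R j"
        and zc: "z \<in> A' j \<inter> G j \<or> z \<in> A j \<inter> (M - G j)"
        unfolding strict_pref_def by blast
      have yG: "y \<notin> G j" using HG jn yA by auto
      have "z \<noteq> y" using zc yA yG by auto
      then have zy: "(z, y) \<in> R j" using zw yA by auto
      have tr: "trans (R j)" "irrefl (R j)" using ord jn by auto
      have "z \<notin> G j"
      proof
        assume "z \<in> G j"
        then have "(y, z) \<in> R j" using imp jn yA by auto
        with zy tr show False by (meson irrefl_def transE)
      qed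
      then have zA: "z \<in> A j" "z \<notin> A' j" using zc z by auto
      have "z \<notin> B j"
      proof
        assume "z \<in> B j"
        then have "(y, z) \<in> R j" using imp jn yA by auto
        with zy tr show False by (meson irrefl_def transE)
      qed
      then show "\<exists>p \<in> (A j - B j) - X j. (p,y) \<in> R j" using zA zy X_def by auto
    qed
    have cov: "(\<Union>j\<in>set \<sigma>. A j - B j) \<subseteq> (\<Union>j\<in>set \<sigma>. X j)"
    proof
      fix x assume "x \<in> (\<Union>j\<in>set \<sigma>. A j - B j)"
      then obtain j where j: "j < n" "x \<in> A j - B j" using \<sigma> by auto
      then have "x \<in> (\<Union>i<n. A' i)" using U by auto
      then obtain k where "k < n" "x \<in> A' k" by auto
      moreover have "x \<in> H" using j BA by auto
      ultimately show "x \<in> (\<Union>j\<in>set \<sigma>. X j)" using \<sigma> X_def by auto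
    qed
    have XP0: "\<forall>j\<in>set \<sigma>. X j = A j - B j"
      apply (rule sd_eq[OF run \<sigma>(1) _ _ _ star cov])
      using ord HG BH \<sigma>(2) by auto
    have XP: "\<forall>j<n. A' j \<inter> H = A j - B j" using XP0 \<sigma>(2) X_def by auto
    define A'' where "A'' j = A' j - H" for j
    have diff: "\<forall>j<n. A' j - A j = A'' j - B j \<and> A j - A' j = B j - A'' j"
    proof (intro allI impI)
      fix j assume jn: "j < n"
      have e1: "A' j \<inter> H = A j - B j" using XP jn by auto
      have e2: "B j \<subseteq> A j" "A j - B j \<subseteq> H" "B j \<inter> H = {}" using BA BH jn by auto
      show "A' j - A j = A'' j - B j \<and> A j - A' j = B j - A'' j"
        using e1 e2 unfolding A''_def by blast
    qed
    have pa'': "partial_alloc n M A''" using pa unfolding partial_alloc_def A''_def by blast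
    have U'': "(\<Union>i<n. A'' i) = (\<Union>i<n. B i)"
    proof -
      have "(\<Union>i<n. A'' i) = (\<Union>i<n. A' i) - H" unfolding A''_def by blast
      also have "\<dots> = (\<Union>i<n. A i) - H" using U by simp
      also have "\<dots> = (\<Union>i<n. B i)"
      proof -
        have "\<forall>i<n. A i - H = B i" using BA BH by blast
        then show ?thesis by blast
      qed
      finally show ?thesis .
    qed
    have W'': "\<forall>i<n. weak_pref M G R i (A'' i) (B i)"
    proof (intro allI impI)
      fix i assume i: "i < n"
      have "strict_pref M G R i (A' i) (A i) = strict_pref M G R i (A'' i) (B i)"
        using diff i by (intro strict_pref_cong) auto
      moreover have "(A' i = A i) = (A'' i = B i)" using diff i by blast
      ultimately show "weak_pref M G R i (A'' i) (B i)" using W i by (auto simp: weak_pref_def)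
    qed
    have S'': "\<exists>i<n. strict_pref M G R i (A'' i) (B i)"
    proof -
      obtain i where i: "i < n" "strict_pref M G R i (A' i) (A i)" using S by blast
      have "strict_pref M G R i (A' i) (A i) = strict_pref M G R i (A'' i) (B i)"
        using diff i by (intro strict_pref_cong) auto
      then show ?thesis using i by blast
    qed
    have "pareto_dominates n M G R A'' B"
      unfolding pareto_dominates_def using U'' W'' S'' by blast
    then show False using B_po pa'' unfolding pareto_optimal_def by blast
  qed
qed

end
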